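(* Let $a$ be an algebraic element of a ring $K$. (1) The minimal polynomial $f(x)$ of $a$ is unique; moreover, for every $g\in\mathbb{Z}[x]$ with $g(0)=0$ and $g(a)=0$ there exist a positive integer $k$ and $h\in\mathbb{Z}[x]$ such that $k\,g(x)=f(x)h(x)$ and $k$ divides every coefficient of $f$. (2) If $l\,\tilde f(a)=0$ for some positive integer $l$ and some monic $\tilde f\in\mathbb{Z}[x]$ with $\tilde f(0)=0$, then the minimal polynomial of $a$ has the form $f(x)=d\,f^*(x)$ with $d$ a positive integer and $f^*\in\mathbb{Z}[x]$ monic with $f^*(0)=0$.
   Context: Rings are associative and not necessarily unital. An element $a\in K$ is algebraic if $g(a)=0$ for some nonzero $g\in\mathbb{Z}[x]$ with $g(0)=0$. The minimal polynomial of an algebraic element $a$ is a polynomial $f\in\mathbb{Z}[x]$ with $f(0)=0$ and $f(a)=0$ that has the smallest possible degree among nonzero such polynomials and, among those of that degree, the smallest positive leading coefficient. *)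

theory Defs
  imports "HOL-Computational_Algebra.Polynomial"
begin

text \<open>Rings are associative but not necessarily unital: we use the type class ring
  (abelian group under +, associative multiplication, distributive laws), which has no 1.\<close>

definition zsmul :: "int \<Rightarrow> 'a::ab_group_add \<Rightarrow> 'a" where
  "zsmul k x = (if 0 \<le> k then (\<Sum>_<nat k. x) else - (\<Sum>_<nat (- k). x))"

text \<open>Positive powers a^n (n >= 1) in a non-unital ring; the value at n = 0 is
  irrelevant (only used with n >= 1) and set to 0.\<close>
fun ppow :: "'a::ring \<Rightarrow> nat \<Rightarrow> 'a" where
  "ppow a 0 = 0"
| "ppow a (Suc 0) = a"
| "ppow a (Suc (Suc n)) = ppow a (Suc n) * a"

definition eval0 :: "int poly \<Rightarrow> 'a::ring \<Rightarrow> 'a" where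
  "eval0 g a = (\<Sum>i\<in>{1..degree g}. zsmul (coeff g i) (ppow a i))"

definition annihilates :: "int poly \<Rightarrow> 'a::ring \<Rightarrow> bool" where
  "annihilates g a \<longleftrightarrow> coeff g 0 = 0 \<and> eval0 g a = 0"

definition algebraic_elem :: "'a::ring \<Rightarrow> bool" where
  "algebraic_elem a \<longleftrightarrow> (\<exists>g. g \<noteq> 0 \<and> annihilates g a)"

definition is_min_poly :: "'a::ring \<Rightarrow> int poly \<Rightarrow> bool" where
  "is_min_poly a f \<longleftrightarrow>
     f \<noteq> 0 \<and> annihilates f a \<and> lead_coeff f > 0 \<and>
     (\<forall>g. g \<noteq> 0 \<and> annihilates g a \<longrightarrow> degree f \<le> degree g) \<and>
     (\<forall>g. g \<noteq> 0 \<and> annihilates g a \<and> degree g = degree f \<and> lead_coeff g > 0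
          \<longrightarrow> lead_coeff f \<le> lead_coeff g)"

end

theory Submission
  imports Defs
begin

definition nsm :: "nat \<Rightarrow> 'a::ab_group_add \<Rightarrow> 'a" where
  "nsm n x = (\<Sum>_<n. x)"

lemma nsm_0[simp]: "nsm 0 x = 0" by (simp add: nsm_def)
lemma nsm_Suc: "nsm (Suc n) x = nsm n x + x" by (simp add: nsm_def)
lemma nsm_add: "nsm (m + n) x = nsm m x + nsm n x"
  by (induct n) (simp_all add: nsm_Suc algebra_simps)
lemma nsm_plus: "nsm n (x + y) = nsm n x + nsm n y"
  by (simp add: nsm_def sum.distrib)
lemma nsm_minus: "nsm n (x - y) = nsm n x - nsm n y"
  by (simp add: nsm_def sum_subtractf)
lemma nsm_mult: "nsm (m * n) x = nsm m (nsm n x)"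
  by (induct m) (simp_all add: nsm_Suc nsm_add algebra_simps)
lemma nsm_mult_right: "nsm n (x * y) = nsm n x * (y::'a::ring)"
  by (simp add: nsm_def sum_distrib_right)
lemma nsm_sum: "finite A \<Longrightarrow> nsm n (sum f A) = (\<Sum>i\<in>A. nsm n (f i))"
  unfolding nsm_def by (rule sum.swap)
lemma nsm_zero[simp]: "nsm n 0 = 0" by (simp add: nsm_def)

lemma zsmul_alt: "zsmul k x = nsm (nat k) x - nsm (nat (-k)) x"
  by (simp add: zsmul_def nsm_def)

lemma zsmul_diff: "zsmul (int p - int q) x = nsm p x - nsm q x"
proof (cases "q \<le> p")
  case True
  then have "nsm p x = nsm (p - q) x + nsm q x" using nsm_add[of "p-q" q x] by simp
  then show ?thesis using True by (simp add: zsmul_alt nat_diff_distrib)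
next
  case False
  then have "nsm q x = nsm (q - p) x + nsm p x" using nsm_add[of "q-p" p x] by simp
  moreover have "nat (int p - int q) = 0" using False by simp
  moreover have "nat (- (int p - int q)) = q - p" using False by simp
  ultimately show ?thesis by (simp add: zsmul_alt)
qed

lemma int_split: obtains p q where "k = int p - int q"
  by (rule that[of "nat k" "nat (-k)"]) simp

lemma zsmul_add_left: "zsmul (k + m) x = zsmul k x + zsmul m x"
proof -
  obtain p1 q1 where k: "k = int p1 - int q1" by (rule int_split)
  obtain p2 q2 where m: "m = int p2 - int q2" by (rule int_split)
  have km: "k + m = int (p1 + p2) - int (q1 + q2)" unfolding k m by simp
  have "zsmul (k + m) x = zsmul (int (p1 + p2) - int (q1 + q2)) x" by (simp only: km)
  also have "\<dots> = nsm (p1 + p2) x - nsm (q1 + q2) x" by (rule zsmul_diff)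
  also have "\<dots> = (nsm p1 x - nsm q1 x) + (nsm p2 x - nsm q2 x)"
    by (simp only: nsm_add) (simp add: algebra_simps)
  also have "\<dots> = zsmul k x + zsmul m x" unfolding k m zsmul_diff ..
  finally show ?thesis .
qed

lemma zsmul_mult: "zsmul (k * m) x = zsmul k (zsmul m x)"
proof -
  obtain p1 q1 where k: "k = int p1 - int q1" by (rule int_split)
  obtain p2 q2 where m: "m = int p2 - int q2" by (rule int_split)
  have km: "k * m = int (p1*p2 + q1*q2) - int (p1*q2 + q1*p2)" unfolding k m by (simp add: algebra_simps)
  have "zsmul (k * m) x = zsmul (int (p1*p2 + q1*q2) - int (p1*q2 + q1*p2)) x"
    by (simp only: km)
  also have "\<dots> = nsm (p1*p2 + q1*q2) x - nsm (p1*q2 + q1*p2) x"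
    by (rule zsmul_diff)
  also have "\<dots> = zsmul k (zsmul m x)"
    unfolding k m zsmul_diff nsm_minus nsm_add nsm_mult by (simp add: algebra_simps)
  finally show ?thesis .
qed

lemma zsmul_add_right: "zsmul k (x + y) = zsmul k x + zsmul k y"
  by (simp add: zsmul_alt nsm_plus)

lemma zsmul_mult_right: "zsmul k (x * y) = zsmul k x * (y::'a::ring)"
  by (simp add: zsmul_alt nsm_mult_right left_diff_distrib)

lemma zsmul_sum: "finite A \<Longrightarrow> zsmul k (sum f A) = (\<Sum>i\<in>A. zsmul k (f i))"
  by (simp add: zsmul_alt nsm_sum sum_subtractf)

lemma zsmul_zero_left[simp]: "zsmul 0 x = 0" by (simp add: zsmul_def)
lemma zsmul_zero_right[simp]: "zsmul k 0 = 0" by (simp add: zsmul_alt)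
lemma zsmul_neg: "zsmul (-k) x = - zsmul k x"
  using zsmul_add_left[of k "-k" x] by (simp add: eq_neg_iff_add_eq_0 add.commute)

lemma ppow_Suc: "n \<ge> 1 \<Longrightarrow> ppow a (Suc n) = ppow a n * a"
  by (cases n) auto

definition ev :: "nat \<Rightarrow> int poly \<Rightarrow> 'a::ring \<Rightarrow> 'a" where
  "ev N p a = (\<Sum>i\<in>{1..N}. zsmul (coeff p i) (ppow a i))"

lemma eval0_ev: "degree p \<le> N \<Longrightarrow> eval0 p a = ev N p a"
  unfolding eval0_def ev_def
  by (rule sum.mono_neutral_left) (auto simp: coeff_eq_0)

lemma ev_add: "ev N (p + q) a = ev N p a + ev N q a"
  by (simp add: ev_def zsmul_add_left sum.distrib)
lemma ev_uminus: "ev N (- p) a = - ev N p a"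
  by (simp add: ev_def zsmul_neg sum_negf)
lemma ev_smult: "ev N (smult c p) a = zsmul c (ev N p a)"
  by (simp add: ev_def zsmul_mult zsmul_sum)

lemma ev_pCons0:
  assumes "coeff p 0 = 0"
  shows "ev (Suc N) (pCons 0 p) a = ev N p a * a"
proof -
  have "ev (Suc N) (pCons 0 p) a = (\<Sum>i\<in>{0..N}. zsmul (coeff p i) (ppow a (Suc i)))"
    unfolding ev_def One_nat_def sum.atLeast_Suc_atMost_Suc_shift by simp
  also have "\<dots> = (\<Sum>i\<in>{1..N}. zsmul (coeff p i) (ppow a (Suc i)))"
    using assms by (subst sum.atLeast_Suc_atMost) auto
  also have "\<dots> = (\<Sum>i\<in>{1..N}. zsmul (coeff p i) (ppow a i) * a)"
    by (rule sum.cong) (auto simp: ppow_Suc zsmul_mult_right)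
  also have "\<dots> = ev N p a * a" by (simp add: ev_def sum_distrib_right)
  finally show ?thesis .
qed

lemma eval0_add: "eval0 (p + q) a = eval0 p a + eval0 q a"
proof -
  let ?N = "max (degree p) (degree q)"
  have "degree (p + q) \<le> ?N" by (rule degree_add_le_max)
  then show ?thesis by (simp add: eval0_ev[of _ ?N] ev_add)
qed
lemma eval0_uminus: "eval0 (- p) a = - eval0 p a"
  by (simp add: eval0_ev[of _ "degree p"] ev_uminus)
lemma eval0_diff: "eval0 (p - q) a = eval0 p a - eval0 q a"
  by (simp only: diff_conv_add_uminus eval0_add eval0_uminus)
lemma eval0_smult: "eval0 (smult c p) a = zsmul c (eval0 p a)"
  by (simp add: eval0_ev[of _ "degree p"] ev_smult degree_smult_le)
lemma eval0_pCons0: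
  assumes "coeff p 0 = 0" shows "eval0 (pCons 0 p) a = eval0 p a * a"
proof -
  have "eval0 (pCons 0 p) a = ev (Suc (degree p)) (pCons 0 p) a"
    by (rule eval0_ev) (simp add: degree_pCons_le)
  also have "\<dots> = ev (degree p) p a * a" using assms by (rule ev_pCons0)
  also have "\<dots> = eval0 p a * a" by (simp add: eval0_ev[of p "degree p"])
  finally show ?thesis .
qed
lemma eval0_0[simp]: "eval0 0 a = 0" by (simp add: eval0_def)

lemma eval0_mult:
  assumes "annihilates f a"
  shows "eval0 (f * q) a = 0"
proof (induct q rule: pCons_induct)
  case 0 then show ?case by simp
next
  case (pCons c q)
  have c0: "coeff (f * q) 0 = 0" using assms by (simp add: annihilates_def coeff_mult_0)
  have "f * pCons c q = smult c f + pCons 0 (f * q)" by simp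
  then show ?case using assms pCons c0
    by (simp add: eval0_add eval0_smult eval0_pCons0 annihilates_def)
qed

lemma annihilates_diff: "annihilates p a \<Longrightarrow> annihilates q a \<Longrightarrow> annihilates (p - q) a"
  by (simp add: annihilates_def eval0_diff)
lemma annihilates_uminus: "annihilates p a \<Longrightarrow> annihilates (- p) a"
  by (simp add: annihilates_def eval0_uminus)

lemma min_poly_dvd:
  assumes f: "is_min_poly a f" and g: "annihilates g a"
  shows "primitive_part f dvd primitive_part g"
proof -
  have f0: "f \<noteq> 0" and fa: "annihilates f a" and fmin: "\<And>h. h \<noteq> 0 \<Longrightarrow> annihilates h a \<Longrightarrow> degree f \<le> degree h"
    using f by (auto simp: is_min_poly_def)
  define r where "r = pseudo_mod g f"
  obtain c q where c: "c \<noteq> 0" and eq: "smult c g = f * q + r"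
    using pseudo_mod(1)[OF f0, of g] unfolding r_def by blast
  have rdeg: "r = 0 \<or> degree r < degree f" using pseudo_mod(2)[OF f0, of g] unfolding r_def .
  have req: "r = smult c g - f * q" using eq by simp
  have "annihilates r a"
    using g fa unfolding req annihilates_def
    by (simp add: eval0_diff eval0_smult eval0_mult[OF fa] coeff_mult_0)
  with rdeg fmin have "r = 0" by fastforce
  then have "f dvd smult c g" using eq by simp
  then have "primitive_part f dvd primitive_part (smult c g)" by blast
  also have "primitive_part (smult c g) = smult (unit_factor c) (primitive_part g)"
    by (rule primitive_part_smult)
  finally have d: "primitive_part f dvd smult (unit_factor c) (primitive_part g)" .
  have "unit_factor c = 1 \<or> unit_factor c = -1" using c by (auto simp: unit_factor_int_def sgn_if)
  then show ?thesis using d by auto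
qed

lemma cpos: "(f::int poly) \<noteq> 0 \<Longrightarrow> content f > 0"
proof -
  assume "f \<noteq> 0"
  then have "content f \<noteq> 0" by simp
  moreover have "\<bar>content f\<bar> = content f" using normalize_content[of f] by (simp add: normalize_int_def)
  ultimately show ?thesis by linarith
qed

lemma pp_dvd: "primitive_part (g::int poly) dvd g"
  using content_times_primitive_part[of g] by (metis dvd_smult dvd_refl)

theorem proposition1:
  fixes a :: "'a::ring"
  assumes "algebraic_elem a"
  shows "(\<exists>!f. is_min_poly a f)
     \<and> (\<forall>f g. is_min_poly a f \<and> annihilates g a \<longrightarrow>
           (\<exists>k::int. \<exists>h. k > 0 \<and> smult k g = f * h \<and> (\<forall>i. k dvd coeff f i)))
     \<and> (\<forall>l::int. \<forall>ft. l > 0 \<and> lead_coeff ft = 1 \<and> coeff ft 0 = 0 \<and> zsmul l (eval0 ft a) = 0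
           \<longrightarrow> (\<forall>f. is_min_poly a f \<longrightarrow>
                 (\<exists>d::int. \<exists>fs. d > 0 \<and> lead_coeff fs = 1 \<and> coeff fs 0 = 0 \<and> f = smult d fs)))"
proof (intro conjI allI impI)
  let ?S = "{g. g \<noteq> 0 \<and> annihilates g a}"
  obtain g1 where g1: "g1 \<in> ?S" using assms by (auto simp: algebraic_elem_def)
  define n where "n = (LEAST n. \<exists>g\<in>?S. degree g = n)"
  have nex: "\<exists>g\<in>?S. degree g = n" unfolding n_def by (rule LeastI_ex) (use g1 in blast)
  have nmin: "\<And>g. g \<in> ?S \<Longrightarrow> n \<le> degree g" unfolding n_def by (rule Least_le) blast
  let ?T = "{g\<in>?S. degree g = n \<and> lead_coeff g > 0}"
  obtain g2 where g2: "g2 \<in> ?S" "degree g2 = n" using nex by blast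
  have "\<exists>g. g \<in> ?T"
  proof (cases "lead_coeff g2 > 0")
    case True then show ?thesis using g2 by blast
  next
    case False
    moreover have "g2 \<noteq> 0" using g2(1) by simp
    then have "lead_coeff g2 \<noteq> 0" by simp
    ultimately have "lead_coeff g2 < 0" by linarith
    then show ?thesis using g2 by (intro exI[of _ "- g2"]) (auto simp: annihilates_uminus)
  qed
  then obtain g3 where g3: "g3 \<in> ?T" by blast
  define m where "m = (LEAST m::nat. \<exists>g\<in>?T. lead_coeff g = int m)"
  have mex: "\<exists>g\<in>?T. lead_coeff g = int m" unfolding m_def
    by (rule LeastI_ex) (use g3 in \<open>auto intro!: exI[of _ "nat (lead_coeff g3)"]\<close>)
  have mmin: "\<And>g. g \<in> ?T \<Longrightarrow> int m \<le> lead_coeff g"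
  proof -
    fix g assume gT: "g \<in> ?T"
    have "m \<le> nat (lead_coeff g)" unfolding m_def by (rule Least_le) (use gT in auto)
    then show "int m \<le> lead_coeff g" using gT by auto
  qed
  obtain f where fT: "f \<in> ?T" and fm: "lead_coeff f = int m" using mex by blast
  have fmin: "is_min_poly a f"
    unfolding is_min_poly_def using fT nmin mmin fm by auto
  show "\<exists>!f. is_min_poly a f"
  proof (rule ex1I[of _ f])
    show "is_min_poly a f" by fact
  next
    fix f' assume f': "is_min_poly a f'"
    show "f' = f"
    proof (rule ccontr)
      assume ne: "f' \<noteq> f"
      have dg: "degree f' = degree f"
        using f' fmin unfolding is_min_poly_def by (meson antisym)
      have l1: "lead_coeff f' \<le> lead_coeff f"
        using f' fmin dg unfolding is_min_poly_def by simp
      have l2: "lead_coeff f \<le> lead_coeff f'"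
        using f' fmin dg unfolding is_min_poly_def by simp
      have lc: "lead_coeff f' = lead_coeff f" using l1 l2 by (rule antisym)
      have ann: "annihilates (f' - f) a"
        using f' fmin by (auto simp: is_min_poly_def annihilates_diff)
      have dle: "degree (f' - f) \<le> degree f" using degree_diff_le_max[of f' f] dg by simp
      have c0: "coeff (f' - f) (degree f) = 0" using lc dg by simp
      have nz: "f' - f \<noteq> 0" using ne by simp
      have "degree (f' - f) \<noteq> degree f"
      proof
        assume "degree (f' - f) = degree f"
        then have "lead_coeff (f' - f) = 0" using c0 by simp
        then show False using nz leading_coeff_0_iff by blast
      qed
      with dle have "degree (f' - f) < degree f" by simp
      moreover have "degree f \<le> degree (f' - f)"
        using fmin ann \<open>f' - f \<noteq> 0\<close> by (auto simp: is_min_poly_def)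
      ultimately show False by simp
    qed
  qed
next
  fix f g assume H: "is_min_poly a f \<and> annihilates g a"
  then have "primitive_part f dvd primitive_part g" using min_poly_dvd by blast
  moreover have "primitive_part g dvd g"
    by (rule pp_dvd)
  ultimately have "primitive_part f dvd g" by (rule dvd_trans)
  then obtain h where h: "g = primitive_part f * h" by (rule dvdE)
  have f0: "f \<noteq> 0" using H by (auto simp: is_min_poly_def)
  have "smult (content f) g = f * h" unfolding h
    by (metis content_times_primitive_part mult_smult_left)
  moreover have "content f > 0" using f0
by (rule cpos)
  ultimately show "\<exists>k::int. \<exists>h. k > 0 \<and> smult k g = f * h \<and> (\<forall>i. k dvd coeff f i)"
    by auto
next
  fix l :: int and ft f
  assume H: "0 < l \<and> lead_coeff ft = 1 \<and> coeff ft 0 = 0 \<and> zsmul l (eval0 ft a) = 0"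
    and f: "is_min_poly a f"
  have "annihilates (smult l ft) a" using H by (simp add: annihilates_def eval0_smult)
  then have "primitive_part f dvd primitive_part (smult l ft)" using min_poly_dvd f by blast
  also have "primitive_part (smult l ft) = primitive_part ft"
    using H by (simp add: primitive_part_smult)
  also have "primitive_part ft dvd ft"
    by (rule pp_dvd)
  finally obtain h where h: "ft = primitive_part f * h" by (meson dvdE)
  have "lead_coeff (primitive_part f) * lead_coeff h = 1" using H h by (simp add: lead_coeff_mult)
  then have u: "lead_coeff (primitive_part f) = 1 \<or> lead_coeff (primitive_part f) = -1"
    using zmult_eq_1_iff by blast
  have f0: "f \<noteq> 0" and fl: "lead_coeff f > 0" and fc: "coeff f 0 = 0"
    using f by (auto simp: is_min_poly_def annihilates_def)
  have cpos: "content f > 0" using f0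
by (rule cpos)
  have fe: "f = smult (content f) (primitive_part f)" by simp
  have "lead_coeff f = lead_coeff (smult (content f) (primitive_part f))"
    using fe by (rule arg_cong)
  also have "\<dots> = content f * lead_coeff (primitive_part f)" by (rule lead_coeff_smult)
  finally have "lead_coeff f = content f * lead_coeff (primitive_part f)" .
  with fl cpos u have l1: "lead_coeff (primitive_part f) = 1"
    by (auto simp: zero_less_mult_iff)
  have "coeff f 0 = content f * coeff (primitive_part f) 0"
    by (subst fe) (simp only: coeff_smult)
  with fc have "content f * coeff (primitive_part f) 0 = 0" by (metis)
  with cpos f0 have c0: "coeff (primitive_part f) 0 = 0" by auto
  show "\<exists>d::int. \<exists>fs. d > 0 \<and> lead_coeff fs = 1 \<and> coeff fs 0 = 0 \<and> f = smult d fs"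
    using cpos l1 c0 fe by blast
qed

end
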